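(* Let $(x_0,x_1)$ be a state with $0\leq x_0\leq 1$ for which the character $ch(x_0,x_1)$ is defined, and let $q\geq 0$ be an integer with $q\leq ch(x_0,x_1)$. Then Paul has a winning strategy for the $q$-round pathological liar game with $1$ lie and initial state $(x_0,x_1)$.
   Context: Pathological liar game with $1$ lie: a state is a pair $(x_0,x_1)$ of nonnegative integers. In each round Paul chooses a legal question $(a_0,a_1)$ with integers $0\leq a_i\leq x_i$, and Carole answers Y or N; the new state is $(a_0,\,a_1+x_0-a_0)$ after Y, or $(x_0-a_0,\,x_1-a_1+a_0)$ after N. Paul wins the $q$-round game iff after $q$ rounds $x_0+x_1\geq 1$. Weight: $wt_q(x_0,x_1)=(q+1)x_0+x_1$. The character $ch(x_0,x_1)$ is the maximum integer $q\geq 0$ such that $wt_q(x_0,x_1)\geq 2^q$. *)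

theory Defs
  imports Main
begin

fun liar_Y :: "nat \<times> nat \<Rightarrow> nat \<times> nat \<Rightarrow> nat \<times> nat" where
  "liar_Y (x0, x1) (a0, a1) = (a0, a1 + (x0 - a0))"

fun liar_N :: "nat \<times> nat \<Rightarrow> nat \<times> nat \<Rightarrow> nat \<times> nat" where
  "liar_N (x0, x1) (a0, a1) = (x0 - a0, (x1 - a1) + a0)"

fun paul_wins :: "nat \<Rightarrow> nat \<times> nat \<Rightarrow> bool" where
  "paul_wins 0 (x0, x1) = (x0 + x1 \<ge> 1)"
| "paul_wins (Suc q) (x0, x1) =
     (\<exists>a0 a1. a0 \<le> x0 \<and> a1 \<le> x1 \<and>
        paul_wins q (liar_Y (x0, x1) (a0, a1)) \<and>
        paul_wins q (liar_N (x0, x1) (a0, a1)))"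

definition wt :: "nat \<Rightarrow> nat \<Rightarrow> nat \<Rightarrow> nat" where
  "wt q x0 x1 = (q + 1) * x0 + x1"

definition ch_defined :: "nat \<Rightarrow> nat \<Rightarrow> bool" where
  "ch_defined x0 x1 \<longleftrightarrow> (\<exists>q. wt q x0 x1 \<ge> 2 ^ q) \<and> finite {q. wt q x0 x1 \<ge> 2 ^ q}"

definition ch :: "nat \<Rightarrow> nat \<Rightarrow> nat" where
  "ch x0 x1 = (GREATEST q. wt q x0 x1 \<ge> 2 ^ q)"

end

theory Submission
  imports Defs
begin

lemma main_win:
  fixes q :: nat
  shows "x0 \<le> 1 \<Longrightarrow> wt q x0 x1 \<ge> 2 ^ q \<Longrightarrow> paul_wins q (x0, x1)"
proof (induction q arbitrary: x0 x1)
  case 0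
  then show ?case by (simp add: wt_def)
next
  case (Suc q)
  have pq: "q + 1 \<le> (2::nat) ^ q"
    by (induction q) auto
  show ?case
  proof (cases "x0 = 0")
    case True
    then have x1: "x1 \<ge> 2 * 2 ^ q" using Suc.prems by (simp add: wt_def)
    have "paul_wins q (liar_Y (x0, x1) (0, 2^q))"
      using Suc.IH[of 0 "2^q"] True by (simp add: wt_def)
    moreover have "paul_wins q (liar_N (x0, x1) (0, 2^q))"
      using Suc.IH[of 0 "x1 - 2^q"] True x1 by (simp add: wt_def)
    ultimately show ?thesis using True x1 unfolding paul_wins.simps
      by (intro exI[of _ 0] exI[of _ "2^q"]) simp
  next
    case False
    then have x0: "x0 = 1" using Suc.prems by simp
    then have x1: "q + 2 + x1 \<ge> 2 * 2 ^ q" using Suc.prems by (simp add: wt_def)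
    have le: "2^q - 1 \<le> x1" using x1 pq by linarith
    have "paul_wins q (liar_Y (x0, x1) (0, 2^q - 1))"
      using Suc.IH[of 0 "2^q"] x0 by (simp add: wt_def)
    moreover have "paul_wins q (liar_N (x0, x1) (0, 2^q - 1))"
      using Suc.IH[of 1 "x1 - (2^q - 1)"] x0 x1 le by (simp add: wt_def)
    ultimately show ?thesis using le unfolding paul_wins.simps
      by (intro exI[of _ 0] exI[of _ "2^q - 1"]) simp
  qed
qed

lemma down:
  assumes "x0 \<le> 1" "wt c x0 x1 \<ge> 2 ^ c" "q \<le> c"
  shows "wt q x0 x1 \<ge> 2 ^ q"
  using assms(3)
proof (induction rule: inc_induct)
  case base
  then show ?case using assms(2) by simp
next
  case (step n)
  have "(1::nat) \<le> 2 ^ n" by simp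
  moreover have "wt (Suc n) x0 x1 \<le> wt n x0 x1 + 1" using assms(1) by (simp add: wt_def)
  ultimately show ?case using step.IH by simp
qed

theorem lemma12:
  fixes x0 x1 q :: nat
  assumes "x0 \<le> 1"
    and "ch_defined x0 x1"
    and "q \<le> ch x0 x1"
  shows "paul_wins q (x0, x1)"
proof -
  let ?S = "{q. wt q x0 x1 \<ge> 2 ^ q}"
  obtain k where k: "wt k x0 x1 \<ge> 2 ^ k" and fin: "finite ?S"
    using assms(2) unfolding ch_defined_def by blast
  have b: "\<forall>y. wt y x0 x1 \<ge> 2 ^ y \<longrightarrow> y \<le> Max ?S"
    using fin by auto
  have "wt (ch x0 x1) x0 x1 \<ge> 2 ^ ch x0 x1"
    unfolding ch_def by (rule GreatestI_nat[of _ k "Max ?S"]) (use k b in auto)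
  then have "wt q x0 x1 \<ge> 2 ^ q" using down assms(1,3) by blast
  then show ?thesis using main_win assms(1) by blast
qed

end
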